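(* Let $n\geq 1$ and let $A\in \mathcal{M}_{n}(\mathbb{Z})$ with $\det(A)\neq 0$. Let $\Lambda=\{Az : z\in\mathbb{Z}^n\}$ be the lattice generated by the columns of $A$, let $\mathcal{P}_A=\{Ay : y\in[0,1)^n\}$ be its fundamental parallelepiped, and let $\mathcal{F}_A$ be the set of $A$-feasible lattice vectors. If $\lambda = Az\in\mathcal{F}_A$ with $z\in\mathbb{Z}^n$, then $$\|z\|\leq \left(\frac{\kappa(A)}{2}+1\right)\sqrt{n}.$$
   Context: $\|\cdot\|$ denotes the Euclidean norm on $\mathbb{R}^n$, and $d(x,y)=\|x-y\|$. For a subset $\Lambda\subseteq\mathbb{R}^n$, $d(x,\Lambda)=\min_{\lambda\in\Lambda}d(x,\lambda)$. For a matrix $M$, $\|M\|=\max_{\|y\|=1}\|My\|$ is the spectral norm, and for invertible $M$ the condition number is $\kappa(M)=\|M\|\cdot\|M^{-1}\|$. A lattice vector $\lambda\in\Lambda$ is called $A$-feasible if there exists $x\in\mathcal{P}_A$ with $d(\lambda,x)=d(x,\Lambda)$; $\mathcal{F}_A$ denotes the set of $A$-feasible lattice vectors. *)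

theory Defs
  imports "HOL-Analysis.Analysis"
begin

definition int_vec :: "real ^ 'n \<Rightarrow> bool" where
  "int_vec z \<longleftrightarrow> (\<forall>i. z $ i \<in> \<int>)"

definition int_matrix :: "real ^ 'n ^ 'm \<Rightarrow> bool" where
  "int_matrix A \<longleftrightarrow> (\<forall>i j. A $ i $ j \<in> \<int>)"

definition lattice_of :: "real ^ 'n ^ 'n \<Rightarrow> (real ^ 'n) set" where
  "lattice_of A = {A *v z | z. int_vec z}"

definition fund_par :: "real ^ 'n ^ 'n \<Rightarrow> (real ^ 'n) set" where
  "fund_par A = {A *v y | y. \<forall>i. 0 \<le> y $ i \<and> y $ i < 1}"

definition feasible_set :: "real ^ 'n ^ 'n \<Rightarrow> (real ^ 'n) set" where
  "feasible_set A = {l \<in> lattice_of A. \<exists>x \<in> fund_par A. dist l x = infdist x (lattice_of A)}"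

definition spec_norm :: "real ^ 'n ^ 'm \<Rightarrow> real" where
  "spec_norm M = Sup {norm (M *v y) | y. norm y = 1}"

definition cond_num :: "real ^ 'n ^ 'n \<Rightarrow> real" where
  "cond_num M = spec_norm M * spec_norm (matrix_inv M)"

end

theory Submission
  imports Defs
begin

lemma spec_norm_bound:
  fixes M :: "real ^ 'n ^ 'm"
  shows "norm (M *v v) \<le> spec_norm M * norm v"
proof (cases "v = 0")
  case True then show ?thesis by simp
next
  case False
  obtain K where K: "\<And>x. norm (M *v x) \<le> norm x * K"
    using bounded_linear.bounded[OF matrix_vector_mul_bounded_linear[of M]] by blast
  have bdd: "bdd_above {norm (M *v y) | y. norm y = 1}"
    by (rule bdd_aboveI[of _ K]) (use K in \<open>auto, metis mult_1\<close>)
  let ?u = "(1 / norm v) *\<^sub>R v"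
  have nu: "norm ?u = 1" using False by simp
  have "norm (M *v ?u) \<le> spec_norm M"
    unfolding spec_norm_def by (rule cSup_upper[OF _ bdd]) (use nu in blast)
  moreover have "M *v ?u = (1 / norm v) *\<^sub>R (M *v v)"
    by (simp add: matrix_vector_mult_scaleR)
  ultimately have "norm (M *v v) / norm v \<le> spec_norm M" by simp
  then show ?thesis using False by (simp add: divide_le_eq mult.commute)
qed

lemma norm_le_comp:
  fixes v :: "real ^ 'n"
  assumes "\<And>i. \<bar>v $ i\<bar> \<le> c"
  shows "norm v \<le> c * sqrt (real CARD('n))"
proof -
  have c0: "0 \<le> c" using assms[of undefined] by linarith
  have "(\<Sum>i\<in>UNIV. (v $ i)\<^sup>2) \<le> (\<Sum>i\<in>(UNIV::'n set). c\<^sup>2)"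
    apply (rule sum_mono)
    using assms by (metis abs_ge_zero power2_abs power_mono)
  also have "\<dots> = real CARD('n) * c\<^sup>2" by simp
  finally have "sqrt (\<Sum>i\<in>UNIV. (v $ i)\<^sup>2) \<le> sqrt (real CARD('n) * c\<^sup>2)"
    using real_sqrt_le_mono by blast
  also have "\<dots> = c * sqrt (real CARD('n))" using c0 by (simp add: real_sqrt_mult)
  finally show ?thesis by (simp add: norm_vec_def L2_set_def)
qed

theorem lemma2p3:
  fixes A :: "real ^ 'n ^ 'n" and z :: "real ^ 'n"
  assumes "int_matrix A" and "det A \<noteq> 0"
    and "int_vec z" and "A *v z \<in> feasible_set A"
  shows "norm z \<le> (cond_num A / 2 + 1) * sqrt (real CARD('n))"
proof -
  let ?s = "sqrt (real CARD('n))"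
  from assms(4) obtain x where xP: "x \<in> fund_par A"
    and dx: "dist (A *v z) x = infdist x (lattice_of A)"
    unfolding feasible_set_def by blast
  from xP obtain y where xy: "x = A *v y" and y01: "\<And>i. 0 \<le> y $ i \<and> y $ i < 1"
    unfolding fund_par_def by blast
  define r :: "real ^ 'n" where "r = (\<chi> i. of_int (round (y $ i)))"
  have rint: "int_vec r" unfolding r_def int_vec_def by simp
  have rl: "A *v r \<in> lattice_of A" unfolding lattice_of_def using rint by blast
  have "\<And>i. \<bar>(y - r) $ i\<bar> \<le> 1/2"
    unfolding r_def using of_int_round_abs_le by (simp add: abs_minus_commute)
  then have nyr: "norm (y - r) \<le> 1/2 * ?s" by (rule norm_le_comp)
  have ny: "norm y \<le> 1 * ?s"
    by (rule norm_le_comp) (use y01 in \<open>smt (verit)\<close>)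
  have "dist (A *v z) x \<le> dist x (A *v r)" using dx infdist_le[OF rl] by simp
  also have "\<dots> = norm (A *v (y - r))" by (simp add: xy dist_norm matrix_vector_mult_diff_distrib)
  also have "\<dots> \<le> spec_norm A * norm (y - r)" by (rule spec_norm_bound)
  finally have d1: "norm (A *v z - x) \<le> spec_norm A * norm (y - r)" by (simp add: dist_norm)
  have inv: "invertible A" using assms(2) invertible_det_nz by blast
  have li: "matrix_inv A ** A = mat 1"
    using inv unfolding invertible_def matrix_inv_def by (rule someI2_ex) blast
  have zy: "z - y = matrix_inv A *v (A *v z - x)"
    by (simp add: xy matrix_vector_mult_diff_distrib[symmetric] matrix_vector_mul_assoc li)
  have sA: "0 \<le> spec_norm A"
    using spec_norm_bound[of A "axis undefined 1"] by simp
    (meson norm_ge_zero order_trans)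
  have sI: "0 \<le> spec_norm (matrix_inv A)"
    using spec_norm_bound[of "matrix_inv A" "axis undefined 1"] by simp
    (meson norm_ge_zero order_trans)
  have "norm (z - y) \<le> spec_norm (matrix_inv A) * norm (A *v z - x)"
    unfolding zy by (rule spec_norm_bound)
  also have "\<dots> \<le> spec_norm (matrix_inv A) * (spec_norm A * (1/2 * ?s))"
    apply (rule mult_left_mono[OF _ sI])
    using d1 mult_left_mono[OF nyr sA] by linarith
  also have "\<dots> = cond_num A / 2 * ?s" unfolding cond_num_def by simp
  finally have "norm (z - y) \<le> cond_num A / 2 * ?s" .
  moreover have "norm z \<le> norm (z - y) + norm y" using norm_triangle_sub[of z y] by linarith
  ultimately show ?thesis using ny by (simp add: distrib_right)
qed

end
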